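(* In the setting of the context, suppose in addition that $\mathcal B_1,\mathcal B_2\subset\mathcal B$ are subalgebras such that multiplication $\mathcal B_1\otimes\mathcal B_2\to\mathcal B$ is a linear isomorphism, $\Delta(\mathcal B_1)\subset\mathcal B_1\otimes\mathcal B$, $\Delta(\mathcal B_2)\subset\mathcal B\otimes\mathcal B_2$, and define $\Pi'_1(b_1b_2)=b_1\varepsilon(b_2)$, $\Pi'_2(b_1b_2)=\varepsilon(b_1)b_2$ ($b_i\in\mathcal B_i$). If $\mathcal A_i$ and $\mathcal B_j$ are mutually orthogonal for $i\neq j$, i.e. $\langle a_i,b_j\rangle=\varepsilon(a_i)\varepsilon(b_j)$ for all $a_i\in\mathcal A_i$, $b_j\in\mathcal B_j$, $i\neq j$, then $$(\Pi_i\otimes\mathrm{id})\mathcal R=(\mathrm{id}\otimes\Pi'_i)\mathcal R=(\Pi_i\otimes\Pi'_i)\mathcal R,\qquad i=1,2,$$ so the factorizations $\mathcal R=\mathcal R_1\mathcal R_2$ induced by the decompositions of $\mathcal A$ and of $\mathcal B$ coincide.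
   Context: $\mathcal A$ and $\mathcal B$ are bialgebras (comultiplication $\Delta$, counit $\varepsilon$) with a nondegenerate pairing $\langle\cdot,\cdot\rangle:\mathcal A\otimes\mathcal B\to\mathbb C$ satisfying $\langle a,b_1b_2\rangle=\langle\Delta(a),b_1\otimes b_2\rangle$, $\langle a_1a_2,b\rangle=\langle a_2\otimes a_1,\Delta(b)\rangle$ (graded with finite-dimensional components, tensors in the completed tensor product). $\mathcal R=\sum_\alpha a^\alpha\otimes b_\alpha$ is the canonical tensor ($\sum_\alpha\langle a^\alpha,b\rangle b_\alpha=b$, $\sum_\alpha a^\alpha\langle a,b_\alpha\rangle=a$). $\mathcal A_1,\mathcal A_2\subset\mathcal A$ are subalgebras with multiplication $\mathcal A_1\otimes\mathcal A_2\to\mathcal A$ a linear isomorphism, $\Delta(\mathcal A_1)\subset\mathcal A\otimes\mathcal A_1$, $\Delta(\mathcal A_2)\subset\mathcal A_2\otimes\mathcal A$, and $\Pi_1(a_1a_2)=a_1\varepsilon(a_2)$, $\Pi_2(a_1a_2)=\varepsilon(a_1)a_2$ for $a_i\in\mathcal A_i$. *)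

theory Defs
  imports Complex_Main
begin

text \<open>
  A complex vector space is a type of class ab_group_add together with a
  scalar multiplication sc satisfying the axioms of the locale vector_space.
  Elements of algebraic tensor products V (x) V, V (x) V (x) V are represented by finite
  lists of pairs/triples (formal finite sums of pure tensors); two such representatives are
  equal as tensors iff every bilinear (resp. trilinear) scalar form takes the same value on
  them (universal property of the tensor product over a field).
  Elements of the completed tensor product A (x)^ B (A,B graded with finite-dimensional
  components, graded nondegenerate pairing) are represented by the bilinear forms on B x A
  they induce: T corresponds to (b,a) |-> <T, b (x) a> where <x (x) y, b (x) a> = <x,b><a,y>.
\<close>

definition linmap :: "(complex \<Rightarrow> 'a::ab_group_add \<Rightarrow> 'a) \<Rightarrow> (complex \<Rightarrow> 'c::ab_group_add \<Rightarrow> 'c)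
    \<Rightarrow> ('a \<Rightarrow> 'c) \<Rightarrow> bool" where
  "linmap s1 s2 f \<longleftrightarrow> (\<forall>x y. f (x + y) = f x + f y) \<and> (\<forall>c x. f (s1 c x) = s2 c (f x))"

definition lin_functional :: "(complex \<Rightarrow> 'a::ab_group_add \<Rightarrow> 'a) \<Rightarrow> ('a \<Rightarrow> complex) \<Rightarrow> bool" where
  "lin_functional s f \<longleftrightarrow> (\<forall>x y. f (x + y) = f x + f y) \<and> (\<forall>c x. f (s c x) = c * f x)"

definition bilin :: "(complex \<Rightarrow> 'a::ab_group_add \<Rightarrow> 'a) \<Rightarrow> (complex \<Rightarrow> 'c::ab_group_add \<Rightarrow> 'c)
    \<Rightarrow> ('a \<Rightarrow> 'c \<Rightarrow> complex) \<Rightarrow> bool" where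
  "bilin s1 s2 \<phi> \<longleftrightarrow> (\<forall>y. lin_functional s1 (\<lambda>x. \<phi> x y)) \<and> (\<forall>x. lin_functional s2 (\<lambda>y. \<phi> x y))"

definition trilin :: "(complex \<Rightarrow> 'a::ab_group_add \<Rightarrow> 'a) \<Rightarrow> ('a \<Rightarrow> 'a \<Rightarrow> 'a \<Rightarrow> complex) \<Rightarrow> bool" where
  "trilin s \<psi> \<longleftrightarrow> (\<forall>y z. lin_functional s (\<lambda>x. \<psi> x y z)) \<and> (\<forall>x z. lin_functional s (\<lambda>y. \<psi> x y z))
       \<and> (\<forall>x y. lin_functional s (\<lambda>z. \<psi> x y z))"

definition teq2 :: "(complex \<Rightarrow> 'a::ab_group_add \<Rightarrow> 'a) \<Rightarrow> ('a \<times> 'a) list \<Rightarrow> ('a \<times> 'a) list \<Rightarrow> bool" where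
  "teq2 s xs ys \<longleftrightarrow> (\<forall>\<phi>. bilin s s \<phi> \<longrightarrow>
      sum_list (map (\<lambda>(u,v). \<phi> u v) xs) = sum_list (map (\<lambda>(u,v). \<phi> u v) ys))"

definition teq3 :: "(complex \<Rightarrow> 'a::ab_group_add \<Rightarrow> 'a) \<Rightarrow> ('a \<times> 'a \<times> 'a) list \<Rightarrow> ('a \<times> 'a \<times> 'a) list \<Rightarrow> bool" where
  "teq3 s xs ys \<longleftrightarrow> (\<forall>\<psi>. trilin s \<psi> \<longrightarrow>
      sum_list (map (\<lambda>(u,v,w). \<psi> u v w) xs) = sum_list (map (\<lambda>(u,v,w). \<psi> u v w) ys))"

definition bialgebra :: "(complex \<Rightarrow> 'a::ring_1 \<Rightarrow> 'a) \<Rightarrow> ('a \<Rightarrow> ('a \<times> 'a) list) \<Rightarrow> ('a \<Rightarrow> complex) \<Rightarrow> bool" where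
  "bialgebra s D e \<longleftrightarrow>
     vector_space s \<and>
     (\<forall>c x y. s c (x * y) = s c x * y \<and> s c (x * y) = x * s c y) \<and>
     (\<forall>x y. teq2 s (D (x + y)) (D x @ D y)) \<and>
     (\<forall>c x. teq2 s (D (s c x)) (map (\<lambda>(u,v). (s c u, v)) (D x))) \<and>
     (\<forall>x. teq3 s (concat (map (\<lambda>(u,v). map (\<lambda>(u1,u2). (u1,u2,v)) (D u)) (D x)))
                   (concat (map (\<lambda>(u,v). map (\<lambda>(v1,v2). (u,v1,v2)) (D v)) (D x)))) \<and>
     lin_functional s e \<and>
     (\<forall>x. sum_list (map (\<lambda>(u,v). s (e u) v) (D x)) = x \<and>
          sum_list (map (\<lambda>(u,v). s (e v) u) (D x)) = x) \<and>
     (\<forall>x y. teq2 s (D (x * y)) [(u * u', v * v'). (u,v) \<leftarrow> D x, (u',v') \<leftarrow> D y]) \<and>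
     teq2 s (D 1) [(1,1)] \<and>
     (\<forall>x y. e (x * y) = e x * e y) \<and> e 1 = 1"

definition graded_space :: "(complex \<Rightarrow> 'a::ring_1 \<Rightarrow> 'a) \<Rightarrow> (nat \<Rightarrow> 'a set) \<Rightarrow> bool" where
  "graded_space s gr \<longleftrightarrow>
     (\<forall>n. module.subspace s (gr n)) \<and>
     (\<forall>n. \<exists>S. finite S \<and> S \<subseteq> gr n \<and> module.span s S = gr n) \<and>
     (\<forall>a. \<exists>!c. (\<forall>n. c n \<in> gr n) \<and> finite {n. c n \<noteq> 0} \<and> a = (\<Sum>n\<in>{n. c n \<noteq> 0}. c n)) \<and>
     (\<forall>n m x y. x \<in> gr n \<longrightarrow> y \<in> gr m \<longrightarrow> x * y \<in> gr (n + m)) \<and> 1 \<in> gr 0"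

definition graded_bialgebra :: "(complex \<Rightarrow> 'a::ring_1 \<Rightarrow> 'a) \<Rightarrow> ('a \<Rightarrow> ('a \<times> 'a) list) \<Rightarrow> ('a \<Rightarrow> complex)
    \<Rightarrow> (nat \<Rightarrow> 'a set) \<Rightarrow> bool" where
  "graded_bialgebra s D e gr \<longleftrightarrow> bialgebra s D e \<and> graded_space s gr \<and>
     (\<forall>n x. x \<in> gr n \<longrightarrow> (\<exists>xs. teq2 s xs (D x) \<and>
                (\<forall>(u,v)\<in>set xs. \<exists>p q. p + q = n \<and> u \<in> gr p \<and> v \<in> gr q))) \<and>
     (\<forall>n x. x \<in> gr n \<longrightarrow> n > 0 \<longrightarrow> e x = 0)"

definition hopf_pairing ::
  "(complex \<Rightarrow> 'a::ring_1 \<Rightarrow> 'a) \<Rightarrow> ('a \<Rightarrow> ('a \<times> 'a) list) \<Rightarrow> (nat \<Rightarrow> 'a set) \<Rightarrow>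
   (complex \<Rightarrow> 'b::ring_1 \<Rightarrow> 'b) \<Rightarrow> ('b \<Rightarrow> ('b \<times> 'b) list) \<Rightarrow> (nat \<Rightarrow> 'b set) \<Rightarrow>
   ('a \<Rightarrow> 'b \<Rightarrow> complex) \<Rightarrow> bool" where
  "hopf_pairing sA DA grA sB DB grB P \<longleftrightarrow>
     bilin sA sB P \<and>
     (\<forall>a. (\<forall>b. P a b = 0) \<longrightarrow> a = 0) \<and> (\<forall>b. (\<forall>a. P a b = 0) \<longrightarrow> b = 0) \<and>
     (\<forall>n m a b. a \<in> grA n \<longrightarrow> b \<in> grB m \<longrightarrow> n \<noteq> m \<longrightarrow> P a b = 0) \<and>
     (\<forall>a b1 b2. P a (b1 * b2) = sum_list (map (\<lambda>(x,y). P x b1 * P y b2) (DA a))) \<and>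
     (\<forall>a1 a2 b. P (a1 * a2) b = sum_list (map (\<lambda>(u,v). P a2 u * P a1 v) (DB b)))"

definition subalgebra :: "(complex \<Rightarrow> 'a::ring_1 \<Rightarrow> 'a) \<Rightarrow> 'a set \<Rightarrow> bool" where
  "subalgebra s S \<longleftrightarrow> module.subspace s S \<and> 1 \<in> S \<and> (\<forall>x\<in>S. \<forall>y\<in>S. x * y \<in> S)"

definition graded_subspace :: "(nat \<Rightarrow> 'a::ring_1 set) \<Rightarrow> 'a set \<Rightarrow> bool" where
  "graded_subspace gr S \<longleftrightarrow> (\<forall>a\<in>S. \<forall>c. (\<forall>n. c n \<in> gr n) \<and> finite {n. c n \<noteq> 0} \<and>
       a = (\<Sum>n\<in>{n. c n \<noteq> 0}. c n) \<longrightarrow> (\<forall>n. c n \<in> S))"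

definition mult_iso :: "(complex \<Rightarrow> 'a::ring_1 \<Rightarrow> 'a) \<Rightarrow> 'a set \<Rightarrow> 'a set \<Rightarrow> bool" where
  "mult_iso s S1 S2 \<longleftrightarrow>
     (\<forall>a. \<exists>xs. set xs \<subseteq> S1 \<times> S2 \<and> a = sum_list (map (\<lambda>(x,y). x * y) xs)) \<and>
     (\<forall>xs. set xs \<subseteq> S1 \<times> S2 \<longrightarrow> sum_list (map (\<lambda>(x,y). x * y) xs) = 0 \<longrightarrow> teq2 s xs [])"

definition proj1 :: "(complex \<Rightarrow> 'a::ring_1 \<Rightarrow> 'a) \<Rightarrow> ('a \<Rightarrow> complex) \<Rightarrow> 'a set \<Rightarrow> 'a set \<Rightarrow> 'a \<Rightarrow> 'a" where
  "proj1 s e S1 S2 = (THE f. linmap s s f \<and> (\<forall>x\<in>S1. \<forall>y\<in>S2. f (x * y) = s (e y) x))"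

definition proj2 :: "(complex \<Rightarrow> 'a::ring_1 \<Rightarrow> 'a) \<Rightarrow> ('a \<Rightarrow> complex) \<Rightarrow> 'a set \<Rightarrow> 'a set \<Rightarrow> 'a \<Rightarrow> 'a" where
  "proj2 s e S1 S2 = (THE f. linmap s s f \<and> (\<forall>x\<in>S1. \<forall>y\<in>S2. f (x * y) = s (e x) y))"

text \<open>Completed tensor product A (x)^ B as bilinear forms on B x A (see above).
  The canonical tensor R = sum a^alpha (x) b_alpha corresponds to (b,a) |-> <a,b>.\<close>
definition canonR :: "('a \<Rightarrow> 'b \<Rightarrow> complex) \<Rightarrow> 'b \<Rightarrow> 'a \<Rightarrow> complex" where
  "canonR P = (\<lambda>b a. P a b)"

definition trA :: "('a \<Rightarrow> 'b \<Rightarrow> complex) \<Rightarrow> ('a \<Rightarrow> 'a) \<Rightarrow> 'b \<Rightarrow> 'b" where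
  "trA P f b = (THE b'. \<forall>x. P x b' = P (f x) b)"

definition trB :: "('a \<Rightarrow> 'b \<Rightarrow> complex) \<Rightarrow> ('b \<Rightarrow> 'b) \<Rightarrow> 'a \<Rightarrow> 'a" where
  "trB P g a = (THE a'. \<forall>y. P a' y = P a (g y))"

definition tmap :: "('a \<Rightarrow> 'b \<Rightarrow> complex) \<Rightarrow> ('a \<Rightarrow> 'a) \<Rightarrow> ('b \<Rightarrow> 'b) \<Rightarrow> ('b \<Rightarrow> 'a \<Rightarrow> complex) \<Rightarrow> 'b \<Rightarrow> 'a \<Rightarrow> complex" where
  "tmap P f g T = (\<lambda>b a. T (trA P f b) (trB P g a))"

end

theory Submission
  imports Defs
begin
lemma lf_basic:
  assumes "lin_functional s f"
  shows "f 0 = 0" "f (- x) = - f x" "f (x - y) = f x - f y"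
    "f (sum_list (map g xs)) = sum_list (map (\<lambda>z. f (g z)) xs)"
proof -
  have add: "\<And>x y. f (x + y) = f x + f y" using assms unfolding lin_functional_def by blast
  interpret additive f by standard (rule add)
  have z: "f 0 = 0" using add[of 0 0] by simp
  show "f 0 = 0" by (rule z)
  show "f (- x) = - f x" "f (x - y) = f x - f y" by (simp_all add: minus diff)
  show "f (sum_list (map g xs)) = sum_list (map (\<lambda>z. f (g z)) xs)"
    by (induction xs) (simp_all add: add z)
qed

lemma lm_basic:
  assumes "linmap s1 s2 f"
  shows "f 0 = 0" "f (sum_list (map g xs)) = sum_list (map (\<lambda>z. f (g z)) xs)"
proof -
  have add: "\<And>x y. f (x + y) = f x + f y" using assms unfolding linmap_def by blast
  interpret additive f by standard (rule add)
  show "f 0 = 0" by (rule zero)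
  show "f (sum_list (map g xs)) = sum_list (map (\<lambda>z. f (g z)) xs)"
    by (induction xs) (simp_all add: add zero)
qed

lemma lf_scale: "lin_functional s f \<Longrightarrow> f (s c x) = c * f x"
  unfolding lin_functional_def by blast

lemma bilin_prod:
  assumes "lin_functional s1 f" "lin_functional s2 g"
  shows "bilin s1 s2 (\<lambda>p q. f p * g q)"
  using assms unfolding bilin_def lin_functional_def by (auto simp: algebra_simps)

lemma teq2_use:
  assumes "teq2 s xs ys" "lin_functional s f" "lin_functional s g"
  shows "sum_list (map (\<lambda>(p,q). f p * g q) xs) = sum_list (map (\<lambda>(p,q). f p * g q) ys)"
  using assms bilin_prod[OF assms(2,3)] unfolding teq2_def by blast

lemma scale_sum_list:
  assumes "module s"
  shows "s c (sum_list (map h xs)) = sum_list (map (\<lambda>z. s c (h z)) xs)"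
proof -
  interpret module s by fact
  show ?thesis by (induction xs) (simp_all add: scale_right_distrib)
qed

lemma span_eq:
  assumes "lin_functional s L1" "lin_functional s L2" "mult_iso s S1 S2"
    and "\<forall>u\<in>S1. \<forall>v\<in>S2. L1 (u * v) = L2 (u * v)"
  shows "L1 b = L2 b"
proof -
  obtain xs where xs: "set xs \<subseteq> S1 \<times> S2" "b = sum_list (map (\<lambda>(x,y). x * y) xs)"
    using assms(3) unfolding mult_iso_def by blast
  have "L1 b = sum_list (map (\<lambda>z. L1 (case z of (x,y) \<Rightarrow> x * y)) xs)"
    using xs(2) lf_basic(4)[OF assms(1)] by simp
  also have "\<dots> = sum_list (map (\<lambda>z. L2 (case z of (x,y) \<Rightarrow> x * y)) xs)"
    using xs(1) assms(4) by (intro arg_cong[where f=sum_list] map_cong) auto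
  also have "\<dots> = L2 b" using xs(2) lf_basic(4)[OF assms(2), of "\<lambda>(x,y). x * y" xs] by simp
  finally show ?thesis .
qed

definition rep :: "'a::ring_1 set \<Rightarrow> 'a set \<Rightarrow> 'a \<Rightarrow> ('a \<times> 'a) list" where
  "rep S1 S2 a = (SOME xs. set xs \<subseteq> S1 \<times> S2 \<and> a = sum_list (map (\<lambda>(x,y). x * y) xs))"

definition prj :: "('a::ring_1 \<Rightarrow> 'a \<Rightarrow> 'a) \<Rightarrow> 'a set \<Rightarrow> 'a set \<Rightarrow> 'a \<Rightarrow> 'a" where
  "prj g S1 S2 a = sum_list (map (\<lambda>(x,y). g x y) (rep S1 S2 a))"

locale projsetup =
  fixes s :: "complex \<Rightarrow> 'a::ring_1 \<Rightarrow> 'a" and S1 S2 :: "'a set"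
    and F :: "'c \<Rightarrow> 'a \<Rightarrow> complex" and g :: "'a \<Rightarrow> 'a \<Rightarrow> 'a"
  assumes md: "module s"
    and mc: "\<And>c x y. s c (x * y) = s c x * y"
    and sub1: "module.subspace s S1"
    and iso: "mult_iso s S1 S2"
    and Flin: "\<And>c. lin_functional s (F c)"
    and Fsep: "\<And>z. (\<forall>c. F c z = 0) \<Longrightarrow> z = 0"
    and gbil: "\<And>c. bilin s s (\<lambda>u v. F c (g u v))"
    and gsc: "\<And>c u v. g (s c u) v = s c (g u v)"
begin

lemma rep: "set (rep S1 S2 a) \<subseteq> S1 \<times> S2 \<and> a = sum_list (map (\<lambda>(x,y). x * y) (rep S1 S2 a))"
  unfolding rep_def by (rule someI_ex) (use iso in \<open>auto simp: mult_iso_def\<close>)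

lemma wd:
  assumes "set xs \<subseteq> S1 \<times> S2" "set ys \<subseteq> S1 \<times> S2"
    "sum_list (map (\<lambda>(x,y). x * y) xs) = sum_list (map (\<lambda>(x,y). x * y) ys)"
  shows "sum_list (map (\<lambda>(x,y). g x y) xs) = sum_list (map (\<lambda>(x,y). g x y) ys)"
proof -
  interpret module s by (rule md)
  define zs where "zs = xs @ map (\<lambda>(x,y). (s (-1) x, y)) ys"
  have "set zs \<subseteq> S1 \<times> S2" using assms(1,2) unfolding zs_def by (auto intro: subspace_neg[OF sub1] subspace_scale[OF sub1])
  moreover have "sum_list (map (\<lambda>(x,y). x * y) zs) = 0"
  proof -
    have "sum_list (map (\<lambda>(x,y). x * y) (map (\<lambda>(x,y). (s (-1) x, y)) ys))
        = s (-1) (sum_list (map (\<lambda>(x,y). x * y) ys))"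
      by (induction ys) (auto simp: mc[symmetric] scale_right_distrib)
    then show ?thesis using assms(3) unfolding zs_def by simp
  qed
  ultimately have T: "teq2 s zs []" using iso unfolding mult_iso_def by blast
  have "\<forall>c. F c (sum_list (map (\<lambda>(x,y). g x y) xs) - sum_list (map (\<lambda>(x,y). g x y) ys)) = 0"
  proof
    fix c
    have "sum_list (map (\<lambda>(u,v). F c (g u v)) zs) = sum_list (map (\<lambda>(u,v). F c (g u v)) [])"
      using T gbil[of c] unfolding teq2_def by blast
    then have "sum_list (map (\<lambda>(u,v). F c (g u v)) xs) + sum_list (map (\<lambda>(u,v). F c (g (s (-1) u) v)) ys) = 0"
      unfolding zs_def by (simp add: split_def o_def)
    moreover have "sum_list (map (\<lambda>(u,v). F c (g (s (-1) u) v)) ys) = - sum_list (map (\<lambda>(u,v). F c (g u v)) ys)"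
    proof -
      have gn: "\<And>u v. g (- u) v = - g u v" using gsc[of "-1"] by simp
      show ?thesis by (induction ys) (auto simp: gn lf_basic(2)[OF Flin])
    qed
    ultimately show "F c (sum_list (map (\<lambda>(x,y). g x y) xs) - sum_list (map (\<lambda>(x,y). g x y) ys)) = 0"
      by (simp add: lf_basic[OF Flin] split_def)
  qed
  then show ?thesis using Fsep by fastforce
qed

lemma prj_rep:
  assumes "set xs \<subseteq> S1 \<times> S2" "a = sum_list (map (\<lambda>(x,y). x * y) xs)"
  shows "prj g S1 S2 a = sum_list (map (\<lambda>(x,y). g x y) xs)"
  unfolding prj_def using wd[of "rep S1 S2 a" xs] rep[of a] assms by auto

lemma prj_lin: "linmap s s (prj g S1 S2)"
  unfolding linmap_def
proof (intro conjI allI)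
  interpret module s by (rule md)
  fix x y
  have rx: "set (rep S1 S2 x) \<subseteq> S1 \<times> S2" "x = sum_list (map (\<lambda>(x,y). x * y) (rep S1 S2 x))"
    and ry: "set (rep S1 S2 y) \<subseteq> S1 \<times> S2" "y = sum_list (map (\<lambda>(x,y). x * y) (rep S1 S2 y))"
    using rep by auto
  show "prj g S1 S2 (x + y) = prj g S1 S2 x + prj g S1 S2 y"
    using prj_rep[of "rep S1 S2 x @ rep S1 S2 y" "x+y"] rx ry unfolding prj_def
    by (metis (no_types, lifting) Un_subset_iff map_append set_append sum_list_append)
next
  interpret module s by (rule md)
  fix c x
  have rx: "set (rep S1 S2 x) \<subseteq> S1 \<times> S2" "x = sum_list (map (\<lambda>(x,y). x * y) (rep S1 S2 x))"
    using rep by auto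
  define ys where "ys = map (\<lambda>(u,v). (s c u, v)) (rep S1 S2 x)"
  have aux: "\<And>zs. s c (sum_list (map (\<lambda>(x,y). x * y) zs)) = sum_list (map (\<lambda>(x,y). x * y) (map (\<lambda>(u,v). (s c u, v)) zs))"
    subgoal for zs by (induction zs) (auto simp: mc scale_right_distrib)
    done
  have "set ys \<subseteq> S1 \<times> S2" using rx(1) unfolding ys_def by (auto intro: subspace_scale[OF sub1])
  moreover have "s c x = sum_list (map (\<lambda>(x,y). x * y) ys)"
    unfolding ys_def using aux rx(2) by metis
  ultimately have "prj g S1 S2 (s c x) = sum_list (map (\<lambda>(x,y). g x y) ys)" by (rule prj_rep)
  also have "\<dots> = s c (prj g S1 S2 x)"
  proof -
    have aux2: "\<And>zs. sum_list (map (\<lambda>(x,y). g x y) (map (\<lambda>(u,v). (s c u, v)) zs)) = s c (sum_list (map (\<lambda>(x,y). g x y) zs))"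
      subgoal for zs by (induction zs) (auto simp: gsc scale_right_distrib)
      done
    show ?thesis unfolding ys_def prj_def by (rule aux2)
  qed
  finally show "prj g S1 S2 (s c x) = s c (prj g S1 S2 x)" .
qed

lemma prj_prod: "x \<in> S1 \<Longrightarrow> y \<in> S2 \<Longrightarrow> prj g S1 S2 (x * y) = g x y"
  using prj_rep[of "[(x,y)]" "x*y"] by simp

lemma the_prj: "(THE f. linmap s s f \<and> (\<forall>x\<in>S1. \<forall>y\<in>S2. f (x * y) = g x y)) = prj g S1 S2"
proof (rule the_equality)
  show "linmap s s (prj g S1 S2) \<and> (\<forall>x\<in>S1. \<forall>y\<in>S2. prj g S1 S2 (x * y) = g x y)"
    using prj_lin prj_prod by blast
next
  fix f assume f: "linmap s s f \<and> (\<forall>x\<in>S1. \<forall>y\<in>S2. f (x * y) = g x y)"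
  show "f = prj g S1 S2"
  proof
    fix a
    have ra: "set (rep S1 S2 a) \<subseteq> S1 \<times> S2" "a = sum_list (map (\<lambda>(x,y). x * y) (rep S1 S2 a))"
      using rep by auto
    have "f a = sum_list (map (\<lambda>z. f (case z of (x,y) \<Rightarrow> x * y)) (rep S1 S2 a))"
      using lm_basic(2)[of s s f "\<lambda>(x,y). x * y" "rep S1 S2 a"] f ra(2) by simp
    also have "\<dots> = sum_list (map (\<lambda>(x,y). g x y) (rep S1 S2 a))"
      using ra(1) f by (intro arg_cong[where f=sum_list] map_cong) auto
    finally show "f a = prj g S1 S2 a" unfolding prj_def .
  qed
qed

end

lemma sum_pair_cong:
  "(\<And>p q. (p,q) \<in> set zs \<Longrightarrow> f p q = g p q) \<Longrightarrow>
   sum_list (map (\<lambda>(p,q). f p q) zs) = sum_list (map (\<lambda>(p,q). g p q) zs)"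
  by (induction zs) auto

lemma sum_pair_cmult:
  "sum_list (map (\<lambda>(p,q). (c::complex) * f p q) zs) = c * sum_list (map (\<lambda>(p,q). f p q) zs)"
  by (induction zs) (auto simp: algebra_simps)

lemma lf_sum_scale2:
  assumes "lin_functional s L"
  shows "L (sum_list (map (\<lambda>(p,q). s (e q) p) zs)) = sum_list (map (\<lambda>(p,q). L p * e q) zs)"
  using lf_basic(4)[OF assms, of "\<lambda>(p,q). s (e q) p" zs] lf_scale[OF assms]
  by (simp add: split_def mult.commute)

lemma lf_sum_scale1:
  assumes "lin_functional s L"
  shows "L (sum_list (map (\<lambda>(p,q). s (e p) q) zs)) = sum_list (map (\<lambda>(p,q). e p * L q) zs)"
  using lf_basic(4)[OF assms, of "\<lambda>(p,q). s (e p) q" zs] lf_scale[OF assms]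
  by (simp add: split_def)

lemma lf_comp: "lin_functional s2 L \<Longrightarrow> linmap s1 s2 f \<Longrightarrow> lin_functional s1 (\<lambda>x. L (f x))"
  unfolding lin_functional_def linmap_def by auto

lemma lf_cmult: "lin_functional s L \<Longrightarrow> lin_functional s (\<lambda>x. c * L x)"
  unfolding lin_functional_def by (auto simp: algebra_simps)

lemma final:
  fixes P :: "'a::ring_1 \<Rightarrow> 'b::ring_1 \<Rightarrow> complex"
  assumes bil: "bilin sA sB P"
    and nA: "\<forall>a. (\<forall>b. P a b = 0) \<longrightarrow> a = 0" and nB: "\<forall>b. (\<forall>a. P a b = 0) \<longrightarrow> b = 0"
    and key: "\<forall>a b. P (f a) b = P a (g b)" and idem: "\<forall>a b. P (f (f a)) b = P (f a) b"
  shows "tmap P f id (canonR P) = tmap P id g (canonR P) \<and> tmap P id g (canonR P) = tmap P f g (canonR P)"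
proof -
  have la: "lin_functional sA (\<lambda>x. P x b)" for b using bil unfolding bilin_def by blast
  have lb: "lin_functional sB (\<lambda>y. P a y)" for a using bil unfolding bilin_def by blast
  have uB: "b1 = b2" if "\<forall>x. P x b1 = P x b2" for b1 b2
  proof -
    have "\<forall>x. P x (b1 - b2) = 0" using that lf_basic(3)[OF lb] by simp
    then show ?thesis using nB by auto
  qed
  have uA: "a1 = a2" if "\<forall>y. P a1 y = P a2 y" for a1 a2
  proof -
    have "\<forall>y. P (a1 - a2) y = 0" using that lf_basic(3)[OF la] by simp
    then show ?thesis using nA by auto
  qed
  have tA: "trA P h b = b'" if "\<forall>x. P x b' = P (h x) b" for h b b'
    unfolding trA_def using that by (intro the_equality) (auto intro: uB)
  have tB: "trB P h a = a'" if "\<forall>y. P a' y = P a (h y)" for h a a'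
    unfolding trB_def using that by (intro the_equality) (auto intro: uA)
  have 1: "trA P f b = g b" for b by (rule tA) (simp add: key)
  have 2: "trA P id b = b" for b by (rule tA) simp
  have 3: "trB P g a = f a" for a by (rule tB) (simp add: key)
  have 4: "trB P id a = a" for a by (rule tB) simp
  have k2: "P (f a) (g b) = P (f a) b" for a b using key idem by metis
  show ?thesis unfolding tmap_def canonR_def
    apply (intro conjI ext)
     apply (simp_all only: 1 2 3 4 id_apply)
    using key k2 by metis+
qed

theorem mainTheorem11:
  fixes sA :: "complex \<Rightarrow> 'a::ring_1 \<Rightarrow> 'a" and DA :: "'a \<Rightarrow> ('a \<times> 'a) list"
    and eA :: "'a \<Rightarrow> complex" and grA :: "nat \<Rightarrow> 'a set"
    and sB :: "complex \<Rightarrow> 'b::ring_1 \<Rightarrow> 'b" and DB :: "'b \<Rightarrow> ('b \<times> 'b) list"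
    and eB :: "'b \<Rightarrow> complex" and grB :: "nat \<Rightarrow> 'b set"
    and P :: "'a \<Rightarrow> 'b \<Rightarrow> complex"
    and A1 A2 :: "'a set" and B1 B2 :: "'b set"
  assumes bA: "graded_bialgebra sA DA eA grA"
    and bB: "graded_bialgebra sB DB eB grB"
    and pair: "hopf_pairing sA DA grA sB DB grB P"
    and A_sub: "subalgebra sA A1" "subalgebra sA A2"
    and A_gr: "graded_subspace grA A1" "graded_subspace grA A2"
    and A_iso: "mult_iso sA A1 A2"
    and A1_cop: "\<forall>a\<in>A1. \<exists>xs. teq2 sA xs (DA a) \<and> set xs \<subseteq> UNIV \<times> A1"
    and A2_cop: "\<forall>a\<in>A2. \<exists>xs. teq2 sA xs (DA a) \<and> set xs \<subseteq> A2 \<times> UNIV"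
    and B_sub: "subalgebra sB B1" "subalgebra sB B2"
    and B_gr: "graded_subspace grB B1" "graded_subspace grB B2"
    and B_iso: "mult_iso sB B1 B2"
    and B1_cop: "\<forall>b\<in>B1. \<exists>xs. teq2 sB xs (DB b) \<and> set xs \<subseteq> B1 \<times> UNIV"
    and B2_cop: "\<forall>b\<in>B2. \<exists>xs. teq2 sB xs (DB b) \<and> set xs \<subseteq> UNIV \<times> B2"
    and orth12: "\<forall>a\<in>A1. \<forall>b\<in>B2. P a b = eA a * eB b"
    and orth21: "\<forall>a\<in>A2. \<forall>b\<in>B1. P a b = eA a * eB b"
  shows "tmap P (proj1 sA eA A1 A2) id (canonR P) = tmap P id (proj1 sB eB B1 B2) (canonR P) \<and>
         tmap P id (proj1 sB eB B1 B2) (canonR P)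
           = tmap P (proj1 sA eA A1 A2) (proj1 sB eB B1 B2) (canonR P) \<and>
         tmap P (proj2 sA eA A1 A2) id (canonR P) = tmap P id (proj2 sB eB B1 B2) (canonR P) \<and>
         tmap P id (proj2 sB eB B1 B2) (canonR P)
           = tmap P (proj2 sA eA A1 A2) (proj2 sB eB B1 B2) (canonR P)"
proof -
  have bA': "bialgebra sA DA eA" and bB': "bialgebra sB DB eB"
    using bA bB unfolding graded_bialgebra_def by auto
  have mA: "module sA" and mB: "module sB"
    using bA' bB' unfolding bialgebra_def module_iff_vector_space by auto
  have mcA: "\<And>c x y. sA c (x * y) = sA c x * y" using bA' unfolding bialgebra_def by blast
  have mcB: "\<And>c x y. sB c (x * y) = sB c x * y" using bB' unfolding bialgebra_def by blast
  have eAl: "lin_functional sA eA" and eBl: "lin_functional sB eB"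
    using bA' bB' unfolding bialgebra_def by auto
  have cuA1: "\<And>x. sum_list (map (\<lambda>(u,v). sA (eA u) v) (DA x)) = x"
   and cuA2: "\<And>x. sum_list (map (\<lambda>(u,v). sA (eA v) u) (DA x)) = x"
    using bA' unfolding bialgebra_def by auto
  have cuB1: "\<And>x. sum_list (map (\<lambda>(u,v). sB (eB u) v) (DB x)) = x"
   and cuB2: "\<And>x. sum_list (map (\<lambda>(u,v). sB (eB v) u) (DB x)) = x"
    using bB' unfolding bialgebra_def by auto
  have eA1: "eA 1 = 1" and eB1: "eB 1 = 1" using bA' bB' unfolding bialgebra_def by auto
  have bil: "bilin sA sB P" and nA: "\<forall>a. (\<forall>b. P a b = 0) \<longrightarrow> a = 0"
    and nB: "\<forall>b. (\<forall>a. P a b = 0) \<longrightarrow> b = 0"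
    and pr1: "\<And>a b1 b2. P a (b1 * b2) = sum_list (map (\<lambda>(x,y). P x b1 * P y b2) (DA a))"
    and pr2: "\<And>a1 a2 b. P (a1 * a2) b = sum_list (map (\<lambda>(u,v). P a2 u * P a1 v) (DB b))"
    using pair unfolding hopf_pairing_def by auto
  have la: "lin_functional sA (\<lambda>x. P x b)" for b using bil unfolding bilin_def by blast
  have lb: "lin_functional sB (\<lambda>y. P a y)" for a using bil unfolding bilin_def by blast
  have sA1: "module.subspace sA A1" "module.subspace sA A2" and oA: "1 \<in> A1" "1 \<in> A2"
    using A_sub unfolding subalgebra_def by auto
  have sB1: "module.subspace sB B1" "module.subspace sB B2" and oB: "1 \<in> B1" "1 \<in> B2"
    using B_sub unfolding subalgebra_def by auto

  interpret pA1: projsetup sA A1 A2 "\<lambda>b a. P a b" "\<lambda>x y. sA (eA y) x"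
  proof
    show "bilin sA sA (\<lambda>u v. P (sA (eA v) u) c)" for c
    proof -
      have "(\<lambda>u v. P (sA (eA v) u) c) = (\<lambda>u v. P u c * eA v)"
        by (auto simp: fun_eq_iff lf_scale[OF la])
      then show ?thesis using bilin_prod[OF la eAl] by simp
    qed
    show "sA (eA v) (sA c u) = sA c (sA (eA v) u)" for c u v
      using module.scale_left_commute[OF mA] by blast
  qed (use mA mcA sA1 A_iso la nA in \<open>auto simp: module_def\<close>)
  interpret pA2: projsetup sA A1 A2 "\<lambda>b a. P a b" "\<lambda>x y. sA (eA x) y"
  proof
    show "bilin sA sA (\<lambda>u v. P (sA (eA u) v) c)" for c
    proof -
      have "(\<lambda>u v. P (sA (eA u) v) c) = (\<lambda>u v. eA u * P v c)"
        by (auto simp: fun_eq_iff lf_scale[OF la])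
      then show ?thesis using bilin_prod[OF eAl la] by simp
    qed
    show "sA (eA (sA c u)) v = sA c (sA (eA u) v)" for c u v
      using module.scale_scale[OF mA] lf_scale[OF eAl] by simp
  qed (use mA mcA sA1 A_iso la nA in \<open>auto simp: module_def\<close>)
  interpret pB1: projsetup sB B1 B2 "\<lambda>a b. P a b" "\<lambda>x y. sB (eB y) x"
  proof
    show "bilin sB sB (\<lambda>u v. P c (sB (eB v) u))" for c
    proof -
      have "(\<lambda>u v. P c (sB (eB v) u)) = (\<lambda>u v. P c u * eB v)"
        by (auto simp: fun_eq_iff lf_scale[OF lb])
      then show ?thesis using bilin_prod[OF lb eBl] by simp
    qed
    show "sB (eB v) (sB c u) = sB c (sB (eB v) u)" for c u v
      using module.scale_left_commute[OF mB] by blast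
  qed (use mB mcB sB1 B_iso lb nB in \<open>auto simp: module_def\<close>)
  interpret pB2: projsetup sB B1 B2 "\<lambda>a b. P a b" "\<lambda>x y. sB (eB x) y"
  proof
    show "bilin sB sB (\<lambda>u v. P c (sB (eB u) v))" for c
    proof -
      have "(\<lambda>u v. P c (sB (eB u) v)) = (\<lambda>u v. eB u * P c v)"
        by (auto simp: fun_eq_iff lf_scale[OF lb])
      then show ?thesis using bilin_prod[OF eBl lb] by simp
    qed
    show "sB (eB (sB c u)) v = sB c (sB (eB u) v)" for c u v
      using module.scale_scale[OF mB] lf_scale[OF eBl] by simp
  qed (use mB mcB sB1 B_iso lb nB in \<open>auto simp: module_def\<close>)

  define Q1 where "Q1 = proj1 sA eA A1 A2"
  define Q2 where "Q2 = proj2 sA eA A1 A2"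
  define R1 where "R1 = proj1 sB eB B1 B2"
  define R2 where "R2 = proj2 sB eB B1 B2"
  have Q1e: "Q1 = prj (\<lambda>x y. sA (eA y) x) A1 A2"
    unfolding Q1_def proj1_def using pA1.the_prj by simp
  have Q2e: "Q2 = prj (\<lambda>x y. sA (eA x) y) A1 A2"
    unfolding Q2_def proj2_def using pA2.the_prj by simp
  have R1e: "R1 = prj (\<lambda>x y. sB (eB y) x) B1 B2"
    unfolding R1_def proj1_def using pB1.the_prj by simp
  have R2e: "R2 = prj (\<lambda>x y. sB (eB x) y) B1 B2"
    unfolding R2_def proj2_def using pB2.the_prj by simp
  have Q1l: "linmap sA sA Q1" and Q2l: "linmap sA sA Q2"
    and R1l: "linmap sB sB R1" and R2l: "linmap sB sB R2"
    using Q1e Q2e R1e R2e pA1.prj_lin pA2.prj_lin pB1.prj_lin pB2.prj_lin by auto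
  have Q1p: "Q1 (x * y) = sA (eA y) x" if "x \<in> A1" "y \<in> A2" for x y
    using Q1e pA1.prj_prod that by simp
  have Q2p: "Q2 (x * y) = sA (eA x) y" if "x \<in> A1" "y \<in> A2" for x y
    using Q2e pA2.prj_prod that by simp
  have R1p: "R1 (x * y) = sB (eB y) x" if "x \<in> B1" "y \<in> B2" for x y
    using R1e pB1.prj_prod that by simp
  have R2p: "R2 (x * y) = sB (eB x) y" if "x \<in> B1" "y \<in> B2" for x y
    using R2e pB2.prj_prod that by simp
  have lsc: "linmap s s f \<Longrightarrow> f (s c x) = s c (f x)" for s f c x
    unfolding linmap_def by blast

  have core1: "eA y * P x (u*v) = eB v * P (x*y) u"
    if xy: "x\<in>A1" "y\<in>A2" "u\<in>B1" "v\<in>B2" for x y u v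
  proof -
    obtain zs where zs: "teq2 sA zs (DA x)" "set zs \<subseteq> UNIV \<times> A1" using A1_cop xy(1) by blast
    obtain ws where ws: "teq2 sB ws (DB u)" "set ws \<subseteq> B1 \<times> UNIV" using B1_cop xy(3) by blast
    have "P x (u*v) = sum_list (map (\<lambda>(p,q). P p u * P q v) (DA x))" by (rule pr1)
    also have "\<dots> = sum_list (map (\<lambda>(p,q). P p u * P q v) zs)"
      using teq2_use[OF zs(1) la[of u] la[of v]] by simp
    also have "\<dots> = sum_list (map (\<lambda>(p,q). eB v * (P p u * eA q)) zs)"
      using zs(2) xy(4) orth12 by (intro sum_pair_cong) auto
    also have "\<dots> = eB v * sum_list (map (\<lambda>(p,q). P p u * eA q) zs)" by (rule sum_pair_cmult)
    also have "\<dots> = eB v * sum_list (map (\<lambda>(p,q). P p u * eA q) (DA x))"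
      using teq2_use[OF zs(1) la[of u] eAl] by simp
    also have "\<dots> = eB v * P x u" using lf_sum_scale2[OF la[of u], of eA "DA x"] cuA2 by simp
    finally have L: "P x (u*v) = eB v * P x u" .
    have "P (x*y) u = sum_list (map (\<lambda>(p,q). P y p * P x q) (DB u))" by (rule pr2)
    also have "\<dots> = sum_list (map (\<lambda>(p,q). P y p * P x q) ws)"
      using teq2_use[OF ws(1) lb[of y] lb[of x]] by simp
    also have "\<dots> = sum_list (map (\<lambda>(p,q). eA y * (eB p * P x q)) ws)"
      using ws(2) xy(2) orth21 by (intro sum_pair_cong) auto
    also have "\<dots> = eA y * sum_list (map (\<lambda>(p,q). eB p * P x q) ws)" by (rule sum_pair_cmult)
    also have "\<dots> = eA y * sum_list (map (\<lambda>(p,q). eB p * P x q) (DB u))"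
      using teq2_use[OF ws(1) eBl lb[of x]] by simp
    also have "\<dots> = eA y * P x u" using lf_sum_scale1[OF lb[of x], of eB "DB u"] cuB1 by simp
    finally have R: "P (x*y) u = eA y * P x u" .
    show ?thesis using L R by simp
  qed
  have core2: "eA x * P y (u*v) = eB u * P (x*y) v"
    if xy: "x\<in>A1" "y\<in>A2" "u\<in>B1" "v\<in>B2" for x y u v
  proof -
    obtain zs where zs: "teq2 sA zs (DA y)" "set zs \<subseteq> A2 \<times> UNIV" using A2_cop xy(2) by blast
    obtain ws where ws: "teq2 sB ws (DB v)" "set ws \<subseteq> UNIV \<times> B2" using B2_cop xy(4) by blast
    have "P y (u*v) = sum_list (map (\<lambda>(p,q). P p u * P q v) (DA y))" by (rule pr1)
    also have "\<dots> = sum_list (map (\<lambda>(p,q). P p u * P q v) zs)"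
      using teq2_use[OF zs(1) la[of u] la[of v]] by simp
    also have "\<dots> = sum_list (map (\<lambda>(p,q). eB u * (eA p * P q v)) zs)"
      using zs(2) xy(3) orth21 by (intro sum_pair_cong) auto
    also have "\<dots> = eB u * sum_list (map (\<lambda>(p,q). eA p * P q v) zs)" by (rule sum_pair_cmult)
    also have "\<dots> = eB u * sum_list (map (\<lambda>(p,q). eA p * P q v) (DA y))"
      using teq2_use[OF zs(1) eAl la[of v]] by simp
    also have "\<dots> = eB u * P y v" using lf_sum_scale1[OF la[of v], of eA "DA y"] cuA1 by simp
    finally have L: "P y (u*v) = eB u * P y v" .
    have "P (x*y) v = sum_list (map (\<lambda>(p,q). P y p * P x q) (DB v))" by (rule pr2)
    also have "\<dots> = sum_list (map (\<lambda>(p,q). P y p * P x q) ws)"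
      using teq2_use[OF ws(1) lb[of y] lb[of x]] by simp
    also have "\<dots> = sum_list (map (\<lambda>(p,q). eA x * (P y p * eB q)) ws)"
      using ws(2) xy(1) orth12 by (intro sum_pair_cong) auto
    also have "\<dots> = eA x * sum_list (map (\<lambda>(p,q). P y p * eB q) ws)" by (rule sum_pair_cmult)
    also have "\<dots> = eA x * sum_list (map (\<lambda>(p,q). P y p * eB q) (DB v))"
      using teq2_use[OF ws(1) lb[of y] eBl] by simp
    also have "\<dots> = eA x * P y v" using lf_sum_scale2[OF lb[of y], of eB "DB v"] cuB2 by simp
    finally have R: "P (x*y) v = eA x * P y v" .
    show ?thesis using L R by simp
  qed
  have step1: "eA y * P x b = P (x*y) (R1 b)" if "x\<in>A1" "y\<in>A2" for x y b
  proof -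
    have "\<forall>u\<in>B1. \<forall>v\<in>B2. eA y * P x (u*v) = P (x*y) (R1 (u*v))"
      using R1p lf_scale[OF lb] core1 that by simp
    then show ?thesis
      using span_eq[OF lf_cmult[OF lb[of x], of "eA y"] lf_comp[OF lb[of "x*y"] R1l] B_iso] by simp
  qed
  have key1: "\<forall>a b. P (Q1 a) b = P a (R1 b)"
  proof (intro allI)
    fix a b
    have "\<forall>x\<in>A1. \<forall>y\<in>A2. P (Q1 (x*y)) b = P (x*y) (R1 b)"
      using Q1p lf_scale[OF la] step1 by simp
    then show "P (Q1 a) b = P a (R1 b)"
      using span_eq[OF lf_comp[OF la[of b] Q1l] la[of "R1 b"] A_iso] by simp
  qed
  have step2: "eA x * P y b = P (x*y) (R2 b)" if "x\<in>A1" "y\<in>A2" for x y b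
  proof -
    have "\<forall>u\<in>B1. \<forall>v\<in>B2. eA x * P y (u*v) = P (x*y) (R2 (u*v))"
      using R2p lf_scale[OF lb] core2 that by simp
    then show ?thesis
      using span_eq[OF lf_cmult[OF lb[of y], of "eA x"] lf_comp[OF lb[of "x*y"] R2l] B_iso] by simp
  qed
  have key2: "\<forall>a b. P (Q2 a) b = P a (R2 b)"
  proof (intro allI)
    fix a b
    have "\<forall>x\<in>A1. \<forall>y\<in>A2. P (Q2 (x*y)) b = P (x*y) (R2 b)"
      using Q2p lf_scale[OF la] step2 by simp
    then show "P (Q2 a) b = P a (R2 b)"
      using span_eq[OF lf_comp[OF la[of b] Q2l] la[of "R2 b"] A_iso] by simp
  qed
  have Q1x: "Q1 x = x" if "x \<in> A1" for x
    using Q1p[OF that oA(2)] eA1 module.scale_one[OF mA] by simp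
  have Q2x: "Q2 y = y" if "y \<in> A2" for y
    using Q2p[OF oA(1) that] eA1 module.scale_one[OF mA] by simp
  have idem1: "\<forall>a b. P (Q1 (Q1 a)) b = P (Q1 a) b"
  proof (intro allI)
    fix a b
    have "\<forall>x\<in>A1. \<forall>y\<in>A2. P (Q1 (Q1 (x*y))) b = P (Q1 (x*y)) b"
      using Q1p lsc[OF Q1l] Q1x by simp
    then show "P (Q1 (Q1 a)) b = P (Q1 a) b"
      using span_eq[OF lf_comp[OF lf_comp[OF la[of b] Q1l] Q1l] lf_comp[OF la[of b] Q1l] A_iso] by simp
  qed
  have idem2: "\<forall>a b. P (Q2 (Q2 a)) b = P (Q2 a) b"
  proof (intro allI)
    fix a b
    have "\<forall>x\<in>A1. \<forall>y\<in>A2. P (Q2 (Q2 (x*y))) b = P (Q2 (x*y)) b"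
      using Q2p lsc[OF Q2l] Q2x by simp
    then show "P (Q2 (Q2 a)) b = P (Q2 a) b"
      using span_eq[OF lf_comp[OF lf_comp[OF la[of b] Q2l] Q2l] lf_comp[OF la[of b] Q2l] A_iso] by simp
  qed
  show ?thesis
    unfolding Q1_def[symmetric] Q2_def[symmetric] R1_def[symmetric] R2_def[symmetric]
    using final[OF bil nA nB key1 idem1] final[OF bil nA nB key2 idem2] by blast
qed

end
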